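(* Let $(f_m)_{m\in\mathbb{N}}$, $f_m(z)=\sum_{k=0}^\infty a_k^{(m)}z^k$, be a sequence of functions analytic in the unit disk with real coefficients $a_k^{(m)}\in\mathbb{R}$ for all $k\in\mathbb{N}_0$, $m\in\mathbb{N}$. For $m\in\mathbb{N}$ and $n\in\mathbb{N}_0$ let $s_n^{(m)}=\sum_{k=0}^n a_k^{(m)}$. Suppose that (i) there exist a constant $0<K<\infty$ and real numbers $\alpha_m$, $m\in\mathbb{N}$, such that $\lim_{t\to1^-}f_m(t)=\alpha_m$ and $|\alpha_m|<K$ for all $m$; (ii) $(f_m)$ converges uniformly on $[0,1]$ as $m\to\infty$ (where $f_m$ is extended to $t=1$ by $f_m(1)=\alpha_m$); (iii) there exists a constant $0<L<\infty$ such that $s_n^{(m)}-\alpha_m<L$ for every $m\in\mathbb{N}$, $n\in\mathbb{N}_0$. Then for every $\epsilon>0$ there exists $N(\epsilon)\in\mathbb{N}$ such that \[ \left|\alpha_m-\frac{1}{n+1}\sum_{k=0}^n(n+1-k)a_k^{(m)}\right|=\left|\alpha_m-\frac{1}{n+1}\sum_{k=0}^n s_k^{(m)}\right|<\epsilon \] whenever $m,n>N(\epsilon)$.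
   Context: $\mathbb{N}_0=\mathbb{N}\cup\{0\}$. *)

theory Defs
  imports "HOL-Analysis.Analysis"
begin

definition pser :: "(nat \<Rightarrow> nat \<Rightarrow> real) \<Rightarrow> nat \<Rightarrow> real \<Rightarrow> real" where
  "pser a m t = (\<Sum>k. a m k * t ^ k)"

definition pser_ext :: "(nat \<Rightarrow> nat \<Rightarrow> real) \<Rightarrow> (nat \<Rightarrow> real) \<Rightarrow> nat \<Rightarrow> real \<Rightarrow> real" where
  "pser_ext a \<alpha> m t = (if t = 1 then \<alpha> m else pser a m t)"

end

theory Submission
  imports Defs
begin


definition TT :: "(nat \<Rightarrow> real) \<Rightarrow> real \<Rightarrow> (real \<Rightarrow> real) \<Rightarrow> real" where
  "TT b y \<phi> = (1 - y) * (\<Sum>n. b n * y^n * \<phi> (y^n))"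

lemma pow_in01: "0 \<le> (y::real) \<Longrightarrow> y \<le> 1 \<Longrightarrow> y^n \<in> {0..1}"
  by (simp add: power_le_one)

lemma summable_cont:
  fixes b :: "nat \<Rightarrow> real"
  assumes nn: "\<And>n. 0 \<le> b n" and y: "0 \<le> y" "y < 1" and sm: "summable (\<lambda>n. b n * y^n)"
    and cont: "continuous_on {0..1} \<phi>"
  shows "summable (\<lambda>n. b n * y^n * \<phi> (y^n))"
proof -
  have "bounded (\<phi> ` {0..1})"
    by (rule compact_imp_bounded[OF compact_continuous_image[OF cont compact_Icc]])
  then obtain B where B0: "\<forall>t\<in>{0..1}. \<bar>\<phi> t\<bar> \<le> B"
    unfolding bounded_real by auto
  then have B: "\<And>t. t \<in> {0..1} \<Longrightarrow> \<bar>\<phi> t\<bar> \<le> B" by blast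
  show ?thesis
  proof (rule summable_comparison_test[OF _ summable_mult[OF sm, of B]])
    show "\<exists>N. \<forall>n\<ge>N. norm (b n * y ^ n * \<phi> (y ^ n)) \<le> B * (b n * y ^ n)"
    proof (intro exI allI impI)
      fix n :: nat
      have "\<bar>\<phi> (y^n)\<bar> \<le> B" using B pow_in01[of y n] y by auto
      moreover have "0 \<le> b n * y^n" using nn y by simp
      ultimately have "(b n * y^n) * \<bar>\<phi> (y^n)\<bar> \<le> (b n * y^n) * B"
        by (rule mult_left_mono)
      moreover have "norm (b n * y ^ n * \<phi> (y ^ n)) = (b n * y^n) * \<bar>\<phi> (y^n)\<bar>"
        unfolding real_norm_def by (subst abs_mult) (simp only: abs_of_nonneg[OF \<open>0 \<le> b n * y^n\<close>] real_norm_def)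
      ultimately show "norm (b n * y ^ n * \<phi> (y ^ n)) \<le> B * (b n * y ^ n)"
        by (simp add: mult.commute)
    qed
  qed
qed

lemma TT_approx:
  fixes b :: "nat \<Rightarrow> real"
  assumes nn: "\<And>n. 0 \<le> b n" and y: "0 \<le> y" "y < 1" and sm: "summable (\<lambda>n. b n * y^n)"
    and s1: "summable (\<lambda>n. b n * y^n * \<phi> (y^n))"
    and s2: "summable (\<lambda>n. b n * y^n * \<psi> (y^n))"
    and d: "\<And>t. t \<in> {0..1} \<Longrightarrow> \<bar>\<phi> t - \<psi> t\<bar> \<le> \<eta>"
  shows "\<bar>TT b y \<phi> - TT b y \<psi>\<bar> \<le> \<eta> * ((1 - y) * (\<Sum>n. b n * y^n))"
proof -
  have eq: "TT b y \<phi> - TT b y \<psi> = (1 - y) * (\<Sum>n. b n * y^n * (\<phi> (y^n) - \<psi> (y^n)))"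
    unfolding TT_def using suminf_diff[OF s1 s2] by (simp add: algebra_simps)
  have sd: "summable (\<lambda>n. b n * y^n * (\<phi> (y^n) - \<psi> (y^n)))"
    using summable_diff[OF s1 s2] by (simp add: algebra_simps)
  have se: "summable (\<lambda>n. \<eta> * (b n * y^n))" using summable_mult[OF sm] .
  have bnd: "\<bar>b n * y^n * (\<phi> (y^n) - \<psi> (y^n))\<bar> \<le> \<eta> * (b n * y^n)" for n
  proof -
    have "\<bar>\<phi> (y^n) - \<psi> (y^n)\<bar> \<le> \<eta>" using d pow_in01[of y n] y by auto
    moreover have "0 \<le> b n * y^n" using nn y by simp
    ultimately have "(b n * y^n) * \<bar>\<phi> (y^n) - \<psi> (y^n)\<bar> \<le> (b n * y^n) * \<eta>"
      by (rule mult_left_mono)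
    moreover have "\<bar>b n * y^n * (\<phi> (y^n) - \<psi> (y^n))\<bar> = (b n * y^n) * \<bar>\<phi> (y^n) - \<psi> (y^n)\<bar>"
      by (subst abs_mult) (simp only: abs_of_nonneg[OF \<open>0 \<le> b n * y^n\<close>] real_norm_def)
    ultimately show ?thesis by (simp add: mult.commute)
  qed
  have "(\<Sum>n. b n * y^n * (\<phi> (y^n) - \<psi> (y^n))) \<le> (\<Sum>n. \<eta> * (b n * y^n))"
    by (rule suminf_le[OF _ sd se]) (use bnd abs_le_D1 in blast)
  moreover have "-(\<Sum>n. \<eta> * (b n * y^n)) \<le> (\<Sum>n. b n * y^n * (\<phi> (y^n) - \<psi> (y^n)))"
  proof -
    have "(\<Sum>n. - (\<eta> * (b n * y^n))) \<le> (\<Sum>n. b n * y^n * (\<phi> (y^n) - \<psi> (y^n)))"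
      by (rule suminf_le[OF _ summable_minus[OF se] sd]) (metis bnd abs_le_iff minus_le_iff)
    then show ?thesis using suminf_minus[OF se] by simp
  qed
  ultimately have "\<bar>\<Sum>n. b n * y^n * (\<phi> (y^n) - \<psi> (y^n))\<bar> \<le> \<eta> * (\<Sum>n. b n * y^n)"
    using suminf_mult[OF sm, of \<eta>] by (simp add: abs_le_iff)
  then have "(1 - y) * \<bar>\<Sum>n. b n * y^n * (\<phi> (y^n) - \<psi> (y^n))\<bar> \<le> (1 - y) * (\<eta> * (\<Sum>n. b n * y^n))"
    using y by (intro mult_left_mono) auto
  then show ?thesis unfolding eq using y by (simp add: abs_mult)
qed


lemma TT_one_one: "0 \<le> z \<Longrightarrow> z < 1 \<Longrightarrow> TT (\<lambda>_. 1) z (\<lambda>_. 1) = 1"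
  unfolding TT_def by (simp add: suminf_geometric)

lemma TT_pow:
  fixes b :: "nat \<Rightarrow> real"
  assumes nn: "\<And>n. 0 \<le> b n" and y: "0 \<le> y" "y < 1"
    and sm: "\<And>z. 0 \<le> z \<Longrightarrow> z < 1 \<Longrightarrow> summable (\<lambda>n. b n * z^n)"
  shows "summable (\<lambda>n. b n * y^n * (y^n)^k)"
    and "TT b y (\<lambda>t. t^k) = (1-y)/(1-y^Suc k) * TT b (y^Suc k) (\<lambda>_. 1)"
proof -
  define z where "z = y^Suc k"
  have zy: "z \<le> y" unfolding z_def using y by (intro power_Suc_le_self) auto
  have z: "0 \<le> z" "z < 1" using zy y unfolding z_def by auto
  have eq: "b n * y^n * (y^n)^k = b n * z^n * 1" for n
  proof -
    have "y^n*(y^n)^k = (y^n)^Suc k" by simp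
    also have "\<dots> = z^n" unfolding z_def by (metis power_mult mult.commute)
    finally show ?thesis by (simp add: mult.assoc)
  qed
  show "summable (\<lambda>n. b n * y^n * (y^n)^k)" unfolding eq using sm[OF z] by simp
  have nz: "1 - z \<noteq> 0" using z by simp
  show "TT b y (\<lambda>t. t^k) = (1-y)/(1-y^Suc k) * TT b (y^Suc k) (\<lambda>_. 1)"
    unfolding TT_def eq z_def[symmetric] using nz by (simp add: field_simps)
qed

lemma TT_pow_diff:
  fixes b :: "nat \<Rightarrow> real"
  assumes nn: "\<And>n. 0 \<le> b n" and y: "0 \<le> y" "y < 1"
    and sm: "\<And>z. 0 \<le> z \<Longrightarrow> z < 1 \<Longrightarrow> summable (\<lambda>n. b n * z^n)"
  shows "\<bar>TT b y (\<lambda>t. t^k) - L * TT (\<lambda>_. 1) y (\<lambda>t. t^k)\<bar> \<le> \<bar>TT b (y^Suc k) (\<lambda>_. 1) - L\<bar>"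
proof -
  define z where "z = y^Suc k"
  have zy: "z \<le> y" unfolding z_def using y by (intro power_Suc_le_self) auto
  have z: "0 \<le> z" "z < 1" using zy y unfolding z_def by auto
  have sm1: "summable (\<lambda>n. (\<lambda>_. 1::real) n * w^n)" if "0 \<le> w" "w < 1" for w
    using summable_geometric[of w] that by simp
  have e1: "TT (\<lambda>_. 1) y (\<lambda>t. t^k) = (1-y)/(1-z) * 1"
    using TT_pow(2)[of "\<lambda>_. 1" y, OF _ y sm1] TT_one_one[OF z] unfolding z_def by simp
  have e2: "TT b y (\<lambda>t. t^k) = (1-y)/(1-z) * TT b z (\<lambda>_. 1)"
    using TT_pow(2)[OF nn y sm] unfolding z_def by simp
  define q where "q = (1-y)/(1-z)"
  have c: "0 \<le> q" "q \<le> 1" unfolding q_def using z zy y by auto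
  have "\<bar>TT b y (\<lambda>t. t^k) - L * TT (\<lambda>_. 1) y (\<lambda>t. t^k)\<bar> = q * \<bar>TT b z (\<lambda>_. 1) - L\<bar>"
  proof -
    have "TT b y (\<lambda>t. t^k) - L * TT (\<lambda>_. 1) y (\<lambda>t. t^k) = q * (TT b z (\<lambda>_. 1) - L)"
      unfolding e1 e2 q_def[symmetric] by (simp add: algebra_simps)
    then show ?thesis by (simp only: abs_mult abs_of_nonneg[OF c(1)])
  qed
  also have "\<dots> \<le> \<bar>TT b z (\<lambda>_. 1) - L\<bar>" using c by (intro mult_left_le_one_le) auto
  finally show ?thesis unfolding z_def .
qed

lemma TT_poly:
  fixes b :: "nat \<Rightarrow> real"
  assumes nn: "\<And>n. 0 \<le> b n" and y: "0 \<le> y" "y < 1"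
    and sm: "\<And>z. 0 \<le> z \<Longrightarrow> z < 1 \<Longrightarrow> summable (\<lambda>n. b n * z^n)"
  shows "summable (\<lambda>n. b n * y^n * (\<Sum>i\<le>d. c i * (y^n)^i))"
    and "TT b y (\<lambda>t. \<Sum>i\<le>d. c i * t^i) = (\<Sum>i\<le>d. c i * TT b y (\<lambda>t. t^i))"
proof -
  have eq: "b n * y^n * (\<Sum>i\<le>d. c i * (y^n)^i) = (\<Sum>i\<le>d. c i * (b n * y^n * (y^n)^i))" for n
    by (simp add: sum_distrib_left algebra_simps)
  have s: "summable (\<lambda>n. c i * (b n * y^n * (y^n)^i))" for i
    by (rule summable_mult[OF TT_pow(1)[OF nn y sm]])
  show "summable (\<lambda>n. b n * y^n * (\<Sum>i\<le>d. c i * (y^n)^i))"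
    unfolding eq by (rule summable_sum) (use s in auto)
  have "(\<Sum>n. b n * y^n * (\<Sum>i\<le>d. c i * (y^n)^i)) = (\<Sum>i\<le>d. \<Sum>n. c i * (b n * y^n * (y^n)^i))"
    unfolding eq by (rule suminf_sum) (use s in auto)
  also have "\<dots> = (\<Sum>i\<le>d. c i * (\<Sum>n. b n * y^n * (y^n)^i))"
    by (rule sum.cong[OF refl], rule suminf_mult, rule TT_pow(1)[OF nn y sm])
  finally show "TT b y (\<lambda>t. \<Sum>i\<le>d. c i * t^i) = (\<Sum>i\<le>d. c i * TT b y (\<lambda>t. t^i))"
    unfolding TT_def by (simp add: sum_distrib_left algebra_simps)
qed



lemma good:
  fixes b :: "nat \<Rightarrow> nat \<Rightarrow> real" and L :: real
  assumes nn: "\<And>m n. m \<ge> 1 \<Longrightarrow> 0 \<le> b m n"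
    and sm: "\<And>m z. m \<ge> 1 \<Longrightarrow> 0 \<le> z \<Longrightarrow> z < 1 \<Longrightarrow> summable (\<lambda>n. b m n * z^n)"
    and uA: "\<And>e. e > 0 \<Longrightarrow> \<exists>\<delta>>0. \<exists>M\<ge>1. \<forall>m\<ge>M. \<forall>z. 1-\<delta> < z \<and> z < 1 \<longrightarrow> \<bar>TT (b m) z (\<lambda>_. 1) - L\<bar> < e"
    and L: "0 \<le> L"
    and cont: "continuous_on {0..1} \<phi>"
    and e: "e > 0"
  shows "\<exists>\<delta>>0. \<exists>M\<ge>1. \<forall>m\<ge>M. \<forall>y. 1-\<delta> < y \<and> y < 1 \<longrightarrow> \<bar>TT (b m) y \<phi> - L * TT (\<lambda>_. 1) y \<phi>\<bar> < e"
proof -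
  define \<eta> where "\<eta> = e / (4 * (L + 1))"
  have \<eta>: "\<eta> > 0" unfolding \<eta>_def using e L by simp
  obtain p where p: "real_polynomial_function p" and pa: "\<And>x. x \<in> {0..1} \<Longrightarrow> \<bar>\<phi> x - p x\<bar> < \<eta>"
    using Stone_Weierstrass_real_polynomial_function[OF compact_Icc cont \<eta>] by blast
  then obtain c d where pc: "p = (\<lambda>x. \<Sum>i\<le>d. c i * x^i)"
    using real_polynomial_function_iff_sum by blast
  define C where "C = (\<Sum>i\<le>d. \<bar>c i\<bar>) + 1"
  have C: "C > 0" unfolding C_def by (simp add: add_nonneg_pos sum_nonneg)
  have "min 1 (e/(4*C)) > 0" using C e by simp
  from uA[OF this] obtain \<delta>0 M where \<delta>0: "\<delta>0 > 0" and M: "M \<ge> 1"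
    and hM: "\<And>m z. m \<ge> M \<Longrightarrow> 1-\<delta>0 < z \<Longrightarrow> z < 1 \<Longrightarrow> \<bar>TT (b m) z (\<lambda>_. 1) - L\<bar> < min 1 (e/(4*C))"
    by blast
  define \<delta> where "\<delta> = min 1 (\<delta>0 / real (d+1))"
  have \<delta>12: "\<delta> > 0" "\<delta> \<le> 1"
    unfolding \<delta>_def using \<delta>0 by auto
  have "\<delta> \<le> \<delta>0 / real (d+1)" unfolding \<delta>_def by simp
  then have "real (d+1) * \<delta> \<le> real (d+1) * (\<delta>0 / real (d+1))" by (intro mult_left_mono) auto
  also have "\<dots> = \<delta>0" by simp
  finally have \<delta>: "\<delta> > 0" "\<delta> \<le> 1" "real (d+1) * \<delta> \<le> \<delta>0" using \<delta>12 by auto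
  show ?thesis
  proof (intro exI conjI allI impI)
    show "\<delta> > 0" "M \<ge> 1" using \<delta> M by auto
    fix m y assume m: "M \<le> m" and yy: "1-\<delta> < y \<and> y < 1"
    have m1: "m \<ge> 1" using m M by simp
    have y: "0 \<le> y" "y < 1" using yy \<delta> by auto
    have nnm: "\<And>n. 0 \<le> b m n" using nn m1 by blast
    have smm: "\<And>z. 0 \<le> z \<Longrightarrow> z < 1 \<Longrightarrow> summable (\<lambda>n. b m n * z^n)" using sm m1 by blast
    have nn1: "\<And>n. (0::real) \<le> (\<lambda>_. 1) n" by simp
    have sm1: "summable (\<lambda>n. (\<lambda>_. 1::real) n * w^n)" if "0 \<le> w" "w < 1" for w
      using summable_geometric[of w] that by simp
    have close: "\<bar>TT (b m) (y^Suc k) (\<lambda>_. 1) - L\<bar> < min 1 (e/(4*C))" if k: "k \<le> d" for k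
    proof -
      have "1 + real (Suc k) * (y - 1) \<le> (1 + (y-1))^Suc k"
        by (rule Bernoulli_inequality) (use y in simp)
      then have B: "1 - real (Suc k) * (1 - y) \<le> y^Suc k" by (simp add: algebra_simps)
      have "real (Suc k) * (1 - y) \<le> real (d+1) * (1 - y)"
        using k y by (intro mult_right_mono) auto
      also have "\<dots> < real (d+1) * \<delta>" using yy by (intro mult_strict_left_mono) auto
      finally have "1 - \<delta>0 < y^Suc k" using B \<delta> by linarith
      moreover have "y^Suc k < 1"
        using power_Suc_le_self[of y k] y by auto
      ultimately show ?thesis using hM[OF m] by blast
    qed
    have polyd: "\<bar>TT (b m) y p - L * TT (\<lambda>_. 1) y p\<bar> \<le> e/4"
    proof -
      have h1: "TT (b m) y p = (\<Sum>i\<le>d. c i * TT (b m) y (\<lambda>t. t^i))"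
        unfolding pc by (rule TT_poly(2)[OF nnm y smm])
      have h2: "TT (\<lambda>_. 1) y p = (\<Sum>i\<le>d. c i * TT (\<lambda>_. 1) y (\<lambda>t. t^i))"
        unfolding pc by (rule TT_poly(2)[OF nn1 y sm1])
      have h3: "L * (\<Sum>i\<le>d. c i * TT (\<lambda>_. 1) y (\<lambda>t. t^i)) = (\<Sum>i\<le>d. c i * (L * TT (\<lambda>_. 1) y (\<lambda>t. t^i)))"
        by (simp only: sum_distrib_left mult.left_commute)
      have eq: "TT (b m) y p - L * TT (\<lambda>_. 1) y p
          = (\<Sum>i\<le>d. c i * (TT (b m) y (\<lambda>t. t^i) - L * TT (\<lambda>_. 1) y (\<lambda>t. t^i)))"
        unfolding h1 h2 h3
        by (simp only: sum_subtractf[symmetric] right_diff_distrib[symmetric])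
      have s1: "\<bar>\<Sum>i\<le>d. c i * (TT (b m) y (\<lambda>t. t^i) - L * TT (\<lambda>_. 1) y (\<lambda>t. t^i))\<bar>
           \<le> (\<Sum>i\<le>d. \<bar>c i\<bar> * \<bar>TT (b m) y (\<lambda>t. t^i) - L * TT (\<lambda>_. 1) y (\<lambda>t. t^i)\<bar>)"
        by (rule order_trans[OF sum_abs]) (simp only: abs_mult order_refl)
      have s2: "(\<Sum>i\<le>d. \<bar>c i\<bar> * \<bar>TT (b m) y (\<lambda>t. t^i) - L * TT (\<lambda>_. 1) y (\<lambda>t. t^i)\<bar>) \<le> (\<Sum>i\<le>d. \<bar>c i\<bar> * (e/(4*C)))"
      proof (rule sum_mono)
        fix i assume "i \<in> {..d}"
        then have "\<bar>TT (b m) y (\<lambda>t. t^i) - L * TT (\<lambda>_. 1) y (\<lambda>t. t^i)\<bar> \<le> e/(4*C)"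
          using TT_pow_diff[OF nnm y smm, of i L] close[of i] by auto
        then show "\<bar>c i\<bar> * \<bar>TT (b m) y (\<lambda>t. t^i) - L * TT (\<lambda>_. 1) y (\<lambda>t. t^i)\<bar> \<le> \<bar>c i\<bar> * (e/(4*C))"
          by (intro mult_left_mono) auto
      qed
      have s3: "(\<Sum>i\<le>d. \<bar>c i\<bar> * (e/(4*C))) = (\<Sum>i\<le>d. \<bar>c i\<bar>) * (e/(4*C))" by (rule sum_distrib_right[symmetric])
      have s4: "(\<Sum>i\<le>d. \<bar>c i\<bar>) * (e/(4*C)) \<le> C * (e/(4*C))" unfolding C_def using e C by (intro mult_right_mono) auto
      have s5: "C * (e/(4*C)) = e/4" using C by simp
      show ?thesis unfolding eq using s1 s2 s3 s4 s5 by linarith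
    qed
    have A1: "TT (b m) y (\<lambda>_. 1) \<le> L + 1"
      using close[of 0] by auto
    have sphi: "summable (\<lambda>n. b m n * y^n * \<phi> (y^n))" by (rule summable_cont[OF nnm y smm[OF y] cont])
    have sp: "summable (\<lambda>n. b m n * y^n * p (y^n))" unfolding pc by (rule TT_poly(1)[OF nnm y smm])
    have sphi1: "summable (\<lambda>n. (\<lambda>_. 1::real) n * y^n * \<phi> (y^n))" by (rule summable_cont[OF nn1 y sm1[OF y] cont])
    have sp1: "summable (\<lambda>n. (\<lambda>_. 1::real) n * y^n * p (y^n))" unfolding pc by (rule TT_poly(1)[OF nn1 y sm1])
    have pa': "\<And>t. t \<in> {0..1} \<Longrightarrow> \<bar>\<phi> t - p t\<bar> \<le> \<eta>" using pa less_imp_le by blast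
    have a1: "\<bar>TT (b m) y \<phi> - TT (b m) y p\<bar> \<le> \<eta> * TT (b m) y (\<lambda>_. 1)"
      using TT_approx[OF nnm y smm[OF y] sphi sp pa'] by (simp add: TT_def)
    also have "\<dots> \<le> \<eta> * (L + 1)" using A1 \<eta> by (intro mult_left_mono) auto
    finally have a1': "\<bar>TT (b m) y \<phi> - TT (b m) y p\<bar> \<le> \<eta> * (L + 1)" .
    have a2: "\<bar>TT (\<lambda>_. 1) y \<phi> - TT (\<lambda>_. 1) y p\<bar> \<le> \<eta> * TT (\<lambda>_. 1) y (\<lambda>_. 1)"
      using TT_approx[OF nn1 y sm1[OF y] sphi1 sp1 pa'] by (simp add: TT_def)
    then have a2': "\<bar>TT (\<lambda>_. 1) y \<phi> - TT (\<lambda>_. 1) y p\<bar> \<le> \<eta>" using TT_one_one[OF y] by simp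
    have a3: "L * \<bar>TT (\<lambda>_. 1) y \<phi> - TT (\<lambda>_. 1) y p\<bar> \<le> L * \<eta>" using a2' L by (rule mult_left_mono)
    have "\<bar>TT (b m) y \<phi> - L * TT (\<lambda>_. 1) y \<phi>\<bar>
        \<le> \<bar>TT (b m) y \<phi> - TT (b m) y p\<bar> + \<bar>TT (b m) y p - L * TT (\<lambda>_. 1) y p\<bar>
           + L * \<bar>TT (\<lambda>_. 1) y \<phi> - TT (\<lambda>_. 1) y p\<bar>"
    proof -
      have "TT (b m) y \<phi> - L * TT (\<lambda>_. 1) y \<phi> = (TT (b m) y \<phi> - TT (b m) y p) + (TT (b m) y p - L * TT (\<lambda>_. 1) y p)
          - L * (TT (\<lambda>_. 1) y \<phi> - TT (\<lambda>_. 1) y p)" by (simp add: algebra_simps)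
      moreover have "\<bar>L * (TT (\<lambda>_. 1) y \<phi> - TT (\<lambda>_. 1) y p)\<bar> = L * \<bar>TT (\<lambda>_. 1) y \<phi> - TT (\<lambda>_. 1) y p\<bar>"
        using L by (simp only: abs_mult abs_of_nonneg)
      moreover have "\<bar>(TT (b m) y \<phi> - TT (b m) y p) + (TT (b m) y p - L * TT (\<lambda>_. 1) y p)
          - L * (TT (\<lambda>_. 1) y \<phi> - TT (\<lambda>_. 1) y p)\<bar> \<le> \<bar>(TT (b m) y \<phi> - TT (b m) y p) + (TT (b m) y p - L * TT (\<lambda>_. 1) y p)\<bar>
          + \<bar>L * (TT (\<lambda>_. 1) y \<phi> - TT (\<lambda>_. 1) y p)\<bar>" by (rule abs_triangle_ineq4)
      moreover have "\<bar>(TT (b m) y \<phi> - TT (b m) y p) + (TT (b m) y p - L * TT (\<lambda>_. 1) y p)\<bar>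
          \<le> \<bar>TT (b m) y \<phi> - TT (b m) y p\<bar> + \<bar>TT (b m) y p - L * TT (\<lambda>_. 1) y p\<bar>" by (rule abs_triangle_ineq)
      ultimately show ?thesis by linarith
    qed
    also have "\<dots> \<le> \<eta> * (L + 1) + e/4 + L * \<eta>" using a1' polyd a3 by linarith
    also have "\<dots> = \<eta> * (2*L + 1) + e/4" by (simp add: algebra_simps)
    also have "\<dots> < e"
    proof -
      have "\<eta> * (2*L + 1) < e/2"
        unfolding \<eta>_def using e L by (simp add: field_simps)
      then show ?thesis using e by linarith
    qed
    finally show "\<bar>TT (b m) y \<phi> - L * TT (\<lambda>_. 1) y \<phi>\<bar> < e" .
  qed
qed



definition cl :: "real \<Rightarrow> real" where "cl x = max 0 (min 1 x)"

lemma step_props: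
  fixes a c t :: real
  assumes ac: "0 < a" "a < c" and t: "0 < t"
  defines "v \<equiv> t * (cl ((t - a)/(c - a)) / max t a)"
  shows "0 \<le> v" "v \<le> 1" "t \<le> a \<Longrightarrow> v = 0" "c \<le> t \<Longrightarrow> v = 1"
proof -
  have ca: "c - a > 0" using ac by simp
  show "t \<le> a \<Longrightarrow> v = 0"
  proof -
    assume "t \<le> a"
    then have "(t - a)/(c - a) \<le> 0" using ca by (simp add: divide_nonpos_pos)
    then show "v = 0" unfolding v_def cl_def by simp
  qed
  show "c \<le> t \<Longrightarrow> v = 1"
  proof -
    assume ct: "c \<le> t"
    then have "(t - a)/(c - a) \<ge> 1" using ca by (simp add: field_simps)
    moreover have "max t a = t" using ct ac by simp
    ultimately show "v = 1" unfolding v_def cl_def using t by simp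
  qed
  have cl01: "0 \<le> cl x" "cl x \<le> 1" for x unfolding cl_def by auto
  show "0 \<le> v" unfolding v_def using cl01 t ac by simp
  show "v \<le> 1"
  proof (cases "t \<le> a")
    case True
    then show ?thesis using \<open>t \<le> a \<Longrightarrow> v = 0\<close> by simp
  next
    case False
    then have "max t a = t" by simp
    then show ?thesis unfolding v_def using cl01 t by simp
  qed
qed

lemma step_cont:
  fixes a c :: real
  assumes ac: "0 < a" "a < c"
  shows "continuous_on {0..1} (\<lambda>t. cl ((t - a)/(c - a)) / max t a)"
  unfolding cl_def using ac by (intro continuous_intros) auto

lemma half_bound: "(1/2::real) * X \<le> r * X \<Longrightarrow> r * X \<le> \<epsilon> \<Longrightarrow> X \<le> 2 * \<epsilon>"
  by linarith

lemma karamata: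
  fixes b :: "nat \<Rightarrow> nat \<Rightarrow> real" and L :: real
  assumes nn: "\<And>m n. m \<ge> 1 \<Longrightarrow> 0 \<le> b m n"
    and sm: "\<And>m z. m \<ge> 1 \<Longrightarrow> 0 \<le> z \<Longrightarrow> z < 1 \<Longrightarrow> summable (\<lambda>n. b m n * z^n)"
    and uA: "\<And>e. e > 0 \<Longrightarrow> \<exists>\<delta>>0. \<exists>M\<ge>1. \<forall>m\<ge>M. \<forall>z. 1-\<delta> < z \<and> z < 1 \<longrightarrow> \<bar>TT (b m) z (\<lambda>_. 1) - L\<bar> < e"
    and L: "0 < L"
    and e: "e > 0"
  shows "\<exists>M\<ge>1. \<exists>N. \<forall>m\<ge>M. \<forall>n\<ge>N. \<bar>(\<Sum>k\<le>n. b m k) / real (n+1) - L\<bar> < e"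
proof -
  define \<theta> where "\<theta> = min (1/2) (e / (4*L))"
  have \<theta>: "0 < \<theta>" "\<theta> \<le> 1/2" "L * \<theta> \<le> e/4"
    unfolding \<theta>_def using e L by (auto simp: min_def field_simps)
  define c2 where "c2 = exp (-(1+\<theta>))"
  define c1 where "c1 = exp (-1::real)"
  define c0 where "c0 = exp (-(1-\<theta>))"
  have cc: "0 < c2" "c2 < c1" "0 < c1" "c1 < c0" unfolding c0_def c1_def c2_def using \<theta> by auto
  define ph where "ph = (\<lambda>t. cl ((t - c2)/(c1 - c2)) / max t c2)"
  define pl where "pl = (\<lambda>t. cl ((t - c1)/(c0 - c1)) / max t c1)"
  have cph: "continuous_on {0..1} ph" unfolding ph_def using cc by (intro step_cont) auto
  have cpl: "continuous_on {0..1} pl" unfolding pl_def using cc by (intro step_cont) auto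
  have sph1: "\<And>t. 0 < t \<Longrightarrow> 0 \<le> t * ph t" unfolding ph_def by (rule step_props(1)[OF cc(1) cc(2)])
  have sph2: "\<And>t. 0 < t \<Longrightarrow> t * ph t \<le> 1" unfolding ph_def by (rule step_props(2)[OF cc(1) cc(2)])
  have sph3: "\<And>t. 0 < t \<Longrightarrow> t \<le> c2 \<Longrightarrow> t * ph t = 0" unfolding ph_def by (rule step_props(3)[OF cc(1) cc(2)])
  have sph4: "\<And>t. 0 < t \<Longrightarrow> c1 \<le> t \<Longrightarrow> t * ph t = 1" unfolding ph_def by (rule step_props(4)[OF cc(1) cc(2)])
  have spl1: "\<And>t. 0 < t \<Longrightarrow> 0 \<le> t * pl t" unfolding pl_def by (rule step_props(1)[OF cc(3) cc(4)])
  have spl2: "\<And>t. 0 < t \<Longrightarrow> t * pl t \<le> 1" unfolding pl_def by (rule step_props(2)[OF cc(3) cc(4)])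
  have spl3: "\<And>t. 0 < t \<Longrightarrow> t \<le> c1 \<Longrightarrow> t * pl t = 0" unfolding pl_def by (rule step_props(3)[OF cc(3) cc(4)])
  have spl4: "\<And>t. 0 < t \<Longrightarrow> c0 \<le> t \<Longrightarrow> t * pl t = 1" unfolding pl_def by (rule step_props(4)[OF cc(3) cc(4)])
  define \<epsilon>1 where "\<epsilon>1 = e / 16"
  have \<epsilon>1: "\<epsilon>1 > 0" unfolding \<epsilon>1_def using e by simp
  obtain \<delta>h Mh where \<delta>h: "\<delta>h > 0" "Mh \<ge> 1" and hh: "\<And>m y. m \<ge> Mh \<Longrightarrow> 1-\<delta>h < y \<Longrightarrow> y < 1 \<Longrightarrow>
      \<bar>TT (b m) y ph - L * TT (\<lambda>_. 1) y ph\<bar> < \<epsilon>1"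
    using good[OF nn sm uA less_imp_le[OF L] cph \<epsilon>1] by blast
  obtain \<delta>l Ml where \<delta>l: "\<delta>l > 0" "Ml \<ge> 1" and hl: "\<And>m y. m \<ge> Ml \<Longrightarrow> 1-\<delta>l < y \<Longrightarrow> y < 1 \<Longrightarrow>
      \<bar>TT (b m) y pl - L * TT (\<lambda>_. 1) y pl\<bar> < \<epsilon>1"
    using good[OF nn sm uA less_imp_le[OF L] cpl \<epsilon>1] by blast
  obtain N :: nat where N: "max (1 / min \<delta>h \<delta>l) (4 * L / e) < real N"
    using reals_Archimedean2 by blast
  show ?thesis
  proof (intro exI conjI allI impI)
    show "max Mh Ml \<ge> 1" using \<delta>h by simp
    fix m n assume m: "max Mh Ml \<le> m" and n: "N \<le> n"
    have m1: "m \<ge> 1" using m \<delta>h by simp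
    define h where "h = 1 / real (n+1)"
    have h: "0 < h" "h \<le> 1" unfolding h_def by auto
    have hn: "h * real (n+1) = 1" unfolding h_def by simp
    have hn2: "real (n+1) * h = 1" unfolding h_def by simp
    have "1 / min \<delta>h \<delta>l < real (n+1)" using N n by linarith
    moreover have d0: "min \<delta>h \<delta>l > 0" using \<delta>h \<delta>l by simp
    ultimately have hh': "1 < real (n+1) * min \<delta>h \<delta>l" by (metis pos_divide_less_eq)
    have np: "0 < real (n+1)" by simp
    have hd: "h < min \<delta>h \<delta>l" unfolding h_def pos_divide_less_eq[OF np] using hh' by (metis mult.commute)
    have Lh: "L * h < e/4"
    proof -
      have "4 * L / e < real (n+1)" using N n by linarith
      then have "4 * L < e * real (n+1)" using e by (simp add: field_simps)
      then show ?thesis unfolding h_def using e by (simp add: field_simps)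
    qed
    define y where "y = exp (-h)"
    have ypow: "y^k = exp (- (real k * h))" for k
      unfolding y_def by (simp add: exp_of_nat_mult[symmetric])
    have y1: "y < 1" unfolding y_def using h by simp
    have y0: "0 \<le> y" "0 < y" unfolding y_def by auto
    have ylow: "1 - h \<le> y" unfolding y_def using exp_ge_add_one_self[of "-h"] by simp
    have yh: "1-\<delta>h < y" "1-\<delta>l < y" using ylow hd by auto
    define r where "r = (1 - y) * real (n+1)"
    have r: "r \<ge> 1/2"
    proof -
      have "exp h \<ge> 1 + h" by simp
      then have "y \<le> 1 / (1 + h)" unfolding y_def using h by (simp add: exp_minus field_simps)
      then have "1 - y \<ge> h / (1 + h)" using h by (simp add: field_simps)
      moreover have "h / (1 + h) \<ge> h / 2" using h by (intro divide_left_mono) auto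
      ultimately have "1 - y \<ge> h / 2" by linarith
      then have "(1 - y) * real (n+1) \<ge> h / 2 * real (n+1)" by (intro mult_right_mono) auto
      moreover have "h / 2 * real (n+1) = 1/2" using hn by simp
      ultimately show ?thesis unfolding r_def by linarith
    qed
    have nnm: "\<And>k. 0 \<le> b m k" using nn m1 by blast
    have smm: "summable (\<lambda>k. b m k * y^k)" using sm m1 y0 y1 by blast
    have sm1: "summable (\<lambda>k. (\<lambda>_. 1::real) k * y^k)" using summable_geometric[of y] y0 y1 by simp
    have nn1: "\<And>k. (0::real) \<le> (\<lambda>_. 1) k" by simp
    define S where "S = (\<Sum>k\<le>n. b m k)"
    define \<mu> where "\<mu> = S / real (n+1)"
    have Sr: "(1 - y) * S = r * \<mu>" unfolding r_def \<mu>_def by simp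
    have ypos: "\<And>k. 0 < y^k" using y0 by simp
    have U1: "(1 - y) * S \<le> TT (b m) y ph"
    proof -
      have sB: "summable (\<lambda>k. b m k * y^k * ph (y^k))" by (rule summable_cont[OF nnm y0(1) y1 smm cph])
      have "S = (\<Sum>k\<le>n. b m k * y^k * ph (y^k))"
        unfolding S_def
      proof (rule sum.cong[OF refl])
        fix k assume "k \<in> {..n}"
        then have "real k \<le> real (n+1)" by simp
        then have "real k * h \<le> real (n+1) * h" using h by (intro mult_right_mono) auto
        then have "real k * h \<le> 1" using hn2 by linarith
        then have "c1 \<le> y^k" unfolding ypow c1_def by simp
        then have "y^k * ph (y^k) = 1" using sph4[OF ypos] by simp
        then show "b m k = b m k * y^k * ph (y^k)" by (simp add: mult.assoc)
      qed
      also have "\<dots> \<le> (\<Sum>k. b m k * y^k * ph (y^k))"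
        by (rule sum_le_suminf[OF sB]) (use nnm sph1[OF ypos] in \<open>auto simp: mult.assoc intro!: mult_nonneg_nonneg\<close>)
      finally show ?thesis unfolding TT_def using y1 by (intro mult_left_mono) auto
    qed
    define K where "K = nat \<lceil>(1+\<theta>) * real (n+1)\<rceil>"
    have x0: "0 \<le> (1+\<theta>) * real (n+1)" using \<theta> by simp
    have Kc: "real K = of_int \<lceil>(1+\<theta>) * real (n+1)\<rceil>" unfolding K_def using x0 by simp
    have Klo: "(1+\<theta>) * real (n+1) \<le> real K" using Kc by simp
    have KK: "real K \<le> (1+\<theta>) * real (n+1) + 1" using Kc ceiling_correct[of "(1+\<theta>) * real (n+1)"] by linarith
    have U2: "TT (\<lambda>_. 1) y ph \<le> (1 - y) * real K"
    proof -
      have "(\<Sum>k. (\<lambda>_. 1::real) k * y^k * ph (y^k)) = (\<Sum>k<K. (\<lambda>_. 1::real) k * y^k * ph (y^k))"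
      proof (rule suminf_finite)
        fix k assume "k \<notin> {..<K}"
        then have "real K \<le> real k" by simp
        moreover note Klo
        ultimately have "(1+\<theta>) \<le> real k * h" unfolding h_def by (simp add: field_simps)
        then have "y^k \<le> c2" unfolding ypow c2_def by simp
        then show "(\<lambda>_. 1::real) k * y^k * ph (y^k) = 0" using sph3[OF ypos] by simp
      qed simp
      also have "\<dots> \<le> (\<Sum>k<K. 1)"
        by (rule sum_mono) (use sph2[OF ypos] in simp)
      finally show ?thesis unfolding TT_def using y1 by (intro mult_left_mono) auto
    qed
    have up: "r * \<mu> \<le> r * (L * (1+\<theta>) + L * h) + \<epsilon>1"
    proof -
      have "r * \<mu> \<le> TT (b m) y ph" using U1 Sr by simp
      also have "\<dots> < L * TT (\<lambda>_. 1) y ph + \<epsilon>1" using hh[of m y] m yh y1 by auto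
      also have "L * TT (\<lambda>_. 1) y ph \<le> L * ((1 - y) * ((1+\<theta>) * real (n+1) + 1))"
        using U2 KK L y1 by (intro mult_left_mono order_trans[OF U2] mult_left_mono[OF KK]) auto
      also have "(1 - y) * ((1+\<theta>) * real (n+1) + 1) = r * (1+\<theta>) + r * h"
        unfolding r_def h_def by (simp add: field_simps)
      finally show ?thesis by (simp add: algebra_simps)
    qed
    have upper: "\<mu> - L < e"
    proof -
      have rX: "r * (\<mu> - (L * (1+\<theta>) + L * h)) \<le> \<epsilon>1" using up by (simp add: algebra_simps)
      then have "\<mu> - (L * (1+\<theta>) + L * h) \<le> 2 * \<epsilon>1"
      proof (cases "\<mu> - (L * (1+\<theta>) + L * h) \<le> 0")
        case False
        then have "1/2 * (\<mu> - (L * (1+\<theta>) + L * h)) \<le> r * (\<mu> - (L * (1+\<theta>) + L * h))"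
          using r by (intro mult_right_mono) auto
        then show ?thesis using rX by (rule half_bound)
      qed (use \<epsilon>1 in auto)
      moreover have "L * (1+\<theta>) = L + L * \<theta>" "L * (1-\<theta>) = L - L * \<theta>" by (simp_all add: algebra_simps)
      ultimately show ?thesis using \<theta> Lh e unfolding \<epsilon>1_def by linarith
    qed
    have D1: "TT (b m) y pl \<le> (1 - y) * S"
    proof -
      have "(\<Sum>k. b m k * y^k * pl (y^k)) = (\<Sum>k\<le>n. b m k * y^k * pl (y^k))"
      proof (rule suminf_finite)
        fix k assume "k \<notin> {..n}"
        then have "real (n+1) \<le> real k" by simp
        then have "1 \<le> real k * h" unfolding h_def by (simp add: field_simps)
        then have "y^k \<le> c1" unfolding ypow c1_def by simp
        then show "b m k * y^k * pl (y^k) = 0" using spl3[OF ypos] by (simp add: mult.assoc)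
      qed simp
      also have "\<dots> \<le> S" unfolding S_def
      proof (rule sum_mono)
        fix k
        have "y^k * pl (y^k) \<le> 1" by (rule spl2[OF ypos])
        then have "b m k * (y^k * pl (y^k)) \<le> b m k * 1" using nnm by (intro mult_left_mono) auto
        then show "b m k * y^k * pl (y^k) \<le> b m k" by (simp add: mult.assoc)
      qed
      finally show ?thesis unfolding TT_def using y1 by (intro mult_left_mono) auto
    qed
    define K' where "K' = nat \<lfloor>(1-\<theta>) * real (n+1)\<rfloor>"
    have x1: "0 \<le> (1-\<theta>) * real (n+1)" using \<theta> by simp
    have Kf: "real K' = of_int \<lfloor>(1-\<theta>) * real (n+1)\<rfloor>" unfolding K'_def using x1 by simp
    have K'hi: "real K' \<le> (1-\<theta>) * real (n+1)" using Kf by simp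
    have fc: "(1-\<theta>) * real (n+1) < of_int \<lfloor>(1-\<theta>) * real (n+1)\<rfloor> + 1"
      using floor_correct[of "(1-\<theta>) * real (n+1)"] by simp
    have KK': "(1-\<theta>) * real (n+1) - 1 \<le> real K'" using Kf fc by linarith
    have D2: "(1 - y) * real K' \<le> TT (\<lambda>_. 1) y pl"
    proof -
      have s1: "summable (\<lambda>k. (\<lambda>_. 1::real) k * y^k * pl (y^k))" by (rule summable_cont[OF nn1 y0(1) y1 sm1 cpl])
      have "real K' = (\<Sum>k<K'. (\<lambda>_. 1::real) k * y^k * pl (y^k))"
      proof -
        have "(\<Sum>k<K'. (\<lambda>_. 1::real) k * y^k * pl (y^k)) = (\<Sum>k<K'. 1)"
        proof (rule sum.cong[OF refl])
          fix k assume "k \<in> {..<K'}"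
          then have "real k < real K'" by simp
          moreover note K'hi
          ultimately have "real k * h < 1 - \<theta>" unfolding h_def by (simp add: field_simps)
          then have "c0 \<le> y^k" unfolding ypow c0_def by simp
          then show "(\<lambda>_. 1::real) k * y^k * pl (y^k) = 1" using spl4[OF ypos] by simp
        qed
        then show ?thesis by simp
      qed
      also have "\<dots> \<le> (\<Sum>k. (\<lambda>_. 1::real) k * y^k * pl (y^k))"
        by (rule sum_le_suminf[OF s1]) (use spl1[OF ypos] in auto)
      finally show ?thesis unfolding TT_def using y1 by (intro mult_left_mono) auto
    qed
    have lo: "r * (L * (1-\<theta>) - L * h) - \<epsilon>1 \<le> r * \<mu>"
    proof -
      have "(1 - y) * ((1-\<theta>) * real (n+1) - 1) \<le> (1 - y) * real K'"
        using KK' y1 by (intro mult_left_mono) auto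
      then have "L * ((1 - y) * ((1-\<theta>) * real (n+1) - 1)) \<le> L * TT (\<lambda>_. 1) y pl"
        using D2 L by (intro mult_left_mono) auto
      moreover have "L * TT (\<lambda>_. 1) y pl - \<epsilon>1 < TT (b m) y pl" using hl[of m y] m yh y1 by auto
      moreover have F3: "(1 - y) * ((1-\<theta>) * real (n+1) - 1) = r * (1-\<theta>) - r * h"
        unfolding r_def h_def by (simp add: field_simps)
      moreover have "L * ((1 - y) * ((1-\<theta>) * real (n+1) - 1)) = r * (L * (1-\<theta>) - L * h)"
        unfolding F3 by (simp add: algebra_simps)
      ultimately show ?thesis using D1 Sr by linarith
    qed
    have lower: "L - \<mu> < e"
    proof -
      have rX: "r * ((L * (1-\<theta>) - L * h) - \<mu>) \<le> \<epsilon>1" using lo by (simp add: algebra_simps)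
      then have H: "(L * (1-\<theta>) - L * h) - \<mu> \<le> 2 * \<epsilon>1"
      proof (cases "(L * (1-\<theta>) - L * h) - \<mu> \<le> 0")
        case False
        then have "1/2 * ((L * (1-\<theta>) - L * h) - \<mu>) \<le> r * ((L * (1-\<theta>) - L * h) - \<mu>)"
          using r by (intro mult_right_mono) auto
        then show ?thesis using rX by (rule half_bound)
      qed (use \<epsilon>1 in auto)
      have eq: "L * (1-\<theta>) = L - L * \<theta>" by (simp add: algebra_simps)
      have "L - \<mu> \<le> L * \<theta> + L * h + 2 * \<epsilon>1" using H unfolding eq by linarith
      moreover have "2 * \<epsilon>1 = e / 8" unfolding \<epsilon>1_def by simp
      ultimately show ?thesis using \<theta>(3) Lh e by linarith
    qed
    show "\<bar>(\<Sum>k\<le>n. b m k) / real (n+1) - L\<bar> < e"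
      using upper lower unfolding \<mu>_def S_def by linarith
  qed
qed


lemma cesaro_eq: "(\<Sum>k\<le>n. real (n + 1 - k) * c k) = (\<Sum>k\<le>n. \<Sum>j\<le>k. c j)"
proof (induction n)
  case 0
  show ?case by simp
next
  case (Suc n)
  have "(\<Sum>k\<le>n. real (Suc n + 1 - k) * c k) = (\<Sum>k\<le>n. real (n + 1 - k) * c k + c k)"
  proof (rule sum.cong[OF refl])
    fix k assume "k \<in> {..n}"
    then have "real (Suc n + 1 - k) = real (n + 1 - k) + 1" by (simp add: of_nat_diff)
    then show "real (Suc n + 1 - k) * c k = real (n + 1 - k) * c k + c k" by (simp add: algebra_simps)
  qed
  then have "(\<Sum>k\<le>Suc n. real (Suc n + 1 - k) * c k)
      = (\<Sum>k\<le>n. real (n + 1 - k) * c k) + (\<Sum>k\<le>n. c k) + c (Suc n)"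
    by (simp add: sum.distrib)
  also have "\<dots> = (\<Sum>k\<le>Suc n. \<Sum>j\<le>k. c j)" using Suc by simp
  finally show ?case .
qed

lemma absconv:
  fixes a :: "nat \<Rightarrow> real"
  assumes an: "\<And>z::complex. norm z < 1 \<Longrightarrow> summable (\<lambda>k. complex_of_real (a k) * z ^ k)"
    and y: "0 \<le> y" "y < 1"
  shows "summable (\<lambda>k. \<bar>a k\<bar> * y^k)"
proof -
  define w where "w = complex_of_real ((1 + y)/2)"
  have nw: "norm w = (1 + y)/2" unfolding w_def norm_of_real using y by simp
  have "norm w < 1" unfolding nw using y by simp
  from an[OF this] have s: "summable (\<lambda>k. complex_of_real (a k) * w ^ k)" .
  have "norm (complex_of_real y) < norm w" unfolding nw norm_of_real using y by simp
  from powser_insidea[OF s this] have "summable (\<lambda>k. norm (complex_of_real (a k) * complex_of_real y ^ k))" .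
  moreover have "norm (complex_of_real (a k) * complex_of_real y ^ k) = \<bar>a k\<bar> * y^k" for k
    using y by (simp add: norm_mult norm_power)
  ultimately show ?thesis by simp
qed

lemma ps_partial:
  fixes a :: "nat \<Rightarrow> real"
  assumes an: "\<And>z::complex. norm z < 1 \<Longrightarrow> summable (\<lambda>k. complex_of_real (a k) * z ^ k)"
    and y: "0 \<le> y" "y < 1"
  shows "(\<lambda>k. (\<Sum>j\<le>k. a j) * y^k) sums ((\<Sum>k. a k * y^k) / (1 - y))"
proof -
  have s1: "summable (\<lambda>k. norm (a k * y^k))"
    using absconv[OF an y] y by (simp add: abs_mult)
  have s2: "summable (\<lambda>k. norm (y^k))" using summable_geometric[of y] y by simp
  from Cauchy_product_sums[OF s1 s2]
  have "(\<lambda>k. \<Sum>i\<le>k. a i * y^i * y^(k-i)) sums ((\<Sum>k. a k * y^k) * (\<Sum>k. y^k))" .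
  moreover have "(\<Sum>i\<le>k. a i * y^i * y^(k-i)) = (\<Sum>j\<le>k. a j) * y^k" for k
    by (simp add: sum_distrib_right mult.assoc power_add[symmetric])
  moreover have "(\<Sum>k. y^k) = 1 / (1 - y)" using suminf_geometric[of y] y by simp
  ultimately show ?thesis by simp
qed

theorem lemma1:
  fixes a :: "nat \<Rightarrow> nat \<Rightarrow> real" and \<alpha> :: "nat \<Rightarrow> real" and K L :: real
  assumes analytic: "\<And>m (z::complex). m \<ge> 1 \<Longrightarrow> norm z < 1 \<Longrightarrow>
             summable (\<lambda>k. complex_of_real (a m k) * z ^ k)"
    and K_pos: "0 < K"
    and lim: "\<And>m. m \<ge> 1 \<Longrightarrow> (pser a m \<longlongrightarrow> \<alpha> m) (at_left 1)"
    and bound: "\<And>m. m \<ge> 1 \<Longrightarrow> \<bar>\<alpha> m\<bar> < K"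
    and unif: "\<exists>g. uniform_limit {0..1} (pser_ext a \<alpha>) g sequentially"
    and L_pos: "0 < L"
    and tauber: "\<And>m n. m \<ge> 1 \<Longrightarrow> (\<Sum>k\<le>n. a m k) - \<alpha> m < L"
  shows "\<forall>\<epsilon>>0. \<exists>N\<ge>1. \<forall>m n. m > N \<and> n > N \<longrightarrow>
           \<bar>\<alpha> m - (\<Sum>k\<le>n. real (n + 1 - k) * a m k) / real (n + 1)\<bar>
             = \<bar>\<alpha> m - (\<Sum>k\<le>n. (\<Sum>j\<le>k. a m j)) / real (n + 1)\<bar>
           \<and> \<bar>\<alpha> m - (\<Sum>k\<le>n. (\<Sum>j\<le>k. a m j)) / real (n + 1)\<bar> < \<epsilon>"
proof -
  define b where "b = (\<lambda>m n. L + \<alpha> m - (\<Sum>k\<le>n. a m k))"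
  have nn: "\<And>m n. m \<ge> 1 \<Longrightarrow> 0 \<le> b m n"
    unfolding b_def using tauber by (smt (verit))
  have TTb: "summable (\<lambda>n. b m n * z^n) \<and> TT (b m) z (\<lambda>_. 1) = L + \<alpha> m - pser a m z"
    if m: "m \<ge> 1" and z: "0 \<le> z" "z < 1" for m z
  proof -
    have ps: "(\<lambda>k. (\<Sum>j\<le>k. a m j) * z^k) sums ((\<Sum>k. a m k * z^k) / (1 - z))"
      by (rule ps_partial[OF analytic[OF m] z])
    have gs: "(\<lambda>k. (L + \<alpha> m) * z^k) sums ((L + \<alpha> m) * (1 / (1 - z)))"
      using sums_mult[OF geometric_sums[of z]] z by simp
    have bs: "(\<lambda>k. b m k * z^k) sums ((L + \<alpha> m) * (1 / (1 - z)) - (\<Sum>k. a m k * z^k) / (1 - z))"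
      unfolding b_def using sums_diff[OF gs ps] by (simp add: algebra_simps)
    have nz: "1 - z \<noteq> 0" using z by simp
    define A where "A = (\<Sum>k. a m k * z^k)"
    have s: "(\<Sum>n. b m n * z^n) = (L + \<alpha> m) * (1 / (1 - z)) - A / (1 - z)"
      unfolding A_def by (rule sums_unique[OF bs, symmetric])
    have e2a: "(L + \<alpha> m) * (1 / (1 - z)) - A / (1 - z) = (L + \<alpha> m - A) / (1 - z)"
      by (simp add: diff_divide_distrib)
    have e2: "(1 - z) * ((L + \<alpha> m) * (1 / (1 - z)) - A / (1 - z)) = L + \<alpha> m - A"
      unfolding e2a using nz by simp
    have "TT (b m) z (\<lambda>_. 1) = (1 - z) * (\<Sum>n. b m n * z^n)" unfolding TT_def by simp
    also have "\<dots> = L + \<alpha> m - pser a m z" by (simp only: s e2 pser_def A_def[symmetric])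
    finally show ?thesis using sums_summable[OF bs] by simp
  qed
  have sm: "\<And>m z. m \<ge> 1 \<Longrightarrow> 0 \<le> z \<Longrightarrow> z < 1 \<Longrightarrow> summable (\<lambda>n. b m n * z^n)"
    using TTb by blast
  obtain g where g: "uniform_limit {0..1} (pser_ext a \<alpha>) g sequentially" using unif by blast
  have uA: "\<exists>\<delta>>0. \<exists>M\<ge>1. \<forall>m\<ge>M. \<forall>z. 1-\<delta> < z \<and> z < 1 \<longrightarrow> \<bar>TT (b m) z (\<lambda>_. 1) - L\<bar> < e"
    if e: "e > 0" for e
  proof -
    have "e/8 > 0" using e by simp
    from uniform_limitD[OF g this] obtain M0 where
      M0: "\<And>m x. m \<ge> M0 \<Longrightarrow> x \<in> {0..1} \<Longrightarrow> dist (pser_ext a \<alpha> m x) (g x) < e/8"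
      unfolding eventually_sequentially by blast
    define M where "M = max M0 1"
    have M: "M \<ge> 1" "M \<ge> M0" unfolding M_def by auto
    have "eventually (\<lambda>z. dist (pser a M z) (\<alpha> M) < e/8) (at_left 1)"
      using lim[OF M(1)] \<open>e/8 > 0\<close> tendsto_iff by blast
    then obtain c where c: "c < 1" and hc: "\<And>z. c < z \<Longrightarrow> z < 1 \<Longrightarrow> dist (pser a M z) (\<alpha> M) < e/8"
      unfolding eventually_at_left_field by blast
    define \<delta> where "\<delta> = min 1 (1 - c)"
    show ?thesis
    proof (intro exI conjI allI impI)
      show "\<delta> > 0" unfolding \<delta>_def using c by simp
      show "M \<ge> 1" by (rule M)
      fix m z assume m: "M \<le> m" and zz: "1 - \<delta> < z \<and> z < 1"
      have z: "0 \<le> z" "z < 1" "c < z" using zz unfolding \<delta>_def by auto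
      have m1: "m \<ge> 1" using m M by simp
      have z01: "z \<in> {0..1}" using z by simp
      have "pser_ext a \<alpha> m z = pser a m z" "pser_ext a \<alpha> M z = pser a M z"
        "pser_ext a \<alpha> m 1 = \<alpha> m" "pser_ext a \<alpha> M 1 = \<alpha> M"
        unfolding pser_ext_def using z by auto
      then have d1: "\<bar>pser a m z - g z\<bar> < e/8" and d2: "\<bar>pser a M z - g z\<bar> < e/8"
        and d3: "\<bar>\<alpha> m - g 1\<bar> < e/8" and d4: "\<bar>\<alpha> M - g 1\<bar> < e/8"
        using M0[of m z] M0[of M z] M0[of m 1] M0[of M 1] m M z01 by (auto simp: dist_real_def)
      have d5: "\<bar>pser a M z - \<alpha> M\<bar> < e/8" using hc[of z] z by (simp add: dist_real_def)
      have "\<bar>\<alpha> m - pser a m z\<bar> < e" using d1 d2 d3 d4 d5 e by linarith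
      then show "\<bar>TT (b m) z (\<lambda>_. 1) - L\<bar> < e" using TTb[OF m1 z(1,2)] by simp
    qed
  qed
  show ?thesis
  proof (intro allI impI)
    fix \<epsilon> :: real assume \<epsilon>: "\<epsilon> > 0"
    obtain M N where M: "M \<ge> 1" and MN: "\<And>m n. m \<ge> M \<Longrightarrow> n \<ge> N \<Longrightarrow> \<bar>(\<Sum>k\<le>n. b m k) / real (n+1) - L\<bar> < \<epsilon>"
      using karamata[OF nn sm uA L_pos \<epsilon>] by blast
    show "\<exists>N\<ge>1. \<forall>m n. m > N \<and> n > N \<longrightarrow>
           \<bar>\<alpha> m - (\<Sum>k\<le>n. real (n + 1 - k) * a m k) / real (n + 1)\<bar>
             = \<bar>\<alpha> m - (\<Sum>k\<le>n. (\<Sum>j\<le>k. a m j)) / real (n + 1)\<bar>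
           \<and> \<bar>\<alpha> m - (\<Sum>k\<le>n. (\<Sum>j\<le>k. a m j)) / real (n + 1)\<bar> < \<epsilon>"
    proof (intro exI conjI allI impI)
      show "max M N \<ge> 1" using M by simp
      fix m n assume mn: "max M N < m \<and> max M N < n"
      show "\<bar>\<alpha> m - (\<Sum>k\<le>n. real (n + 1 - k) * a m k) / real (n + 1)\<bar>
             = \<bar>\<alpha> m - (\<Sum>k\<le>n. (\<Sum>j\<le>k. a m j)) / real (n + 1)\<bar>"
        using cesaro_eq[of n "a m"] by simp
      have "(\<Sum>k\<le>n. b m k) / real (n+1) - L = \<alpha> m - (\<Sum>k\<le>n. (\<Sum>j\<le>k. a m j)) / real (n + 1)"
        unfolding b_def by (simp add: sum_subtractf field_simps)
      then show "\<bar>\<alpha> m - (\<Sum>k\<le>n. (\<Sum>j\<le>k. a m j)) / real (n + 1)\<bar> < \<epsilon>"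
        using MN[of m n] mn by simp
    qed
  qed
qed

end
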